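(* Let $V$ be a set of variables and $\mathcal{R}=\{r_1,\ldots,r_m\}$ be a set of transition rules on $V$. Then $s \xrightarrow{r_i} s'$ iff the sequent $\llbracket r_1\rrbracket @ 0,\ldots,\llbracket r_m\rrbracket @ 0;\ \llbracket s\rrbracket @ w \vdash \delta_1\llbracket s'\rrbracket @ w$ is provable in HyLL.
   Context: HyLL is hybrid (intuitionistic) linear logic with sequents $\Gamma;\Delta\vdash C@w$ ($\Gamma$ unbounded context, $\Delta$ linear context) and hybrid connectives $A\ \mathsf{at}\ u$ and $\downarrow u.A$; worlds here form the monoid $\langle\mathbb{N},+,0\rangle$ (written $u.v$ for composition). A state $s$ over $V=\{a_1,\ldots,a_n\}$ is a conjunction $p_1(a_1)\wedge\cdots\wedge p_n(a_n)$ with each $p_i$ either present or absent; a transition rule $r:s\to s'$ enables the transition $s\xrightarrow{r}s'$. Encoding into HyLL: $\llbracket p_i(a_i)\rrbracket = p_i(a_i)$ (an atom), $\llbracket s\rrbracket=\bigotimes_{i\in 1..n}\llbracket p_i(a_i)\rrbracket$, $\llbracket r: s\to s'\rrbracket = \forall w.\big((\llbracket s\rrbracket\ \mathsf{at}\ w)\multimap \delta_1(\llbracket s'\rrbracket)\ \mathsf{at}\ w\big)$, where the delay connective is $\delta_v A = \downarrow u.(A\ \mathsf{at}\ u.v)$. *)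

theory Defs
  imports "HOL-Library.Multiset"
begin

text \<open>Worlds are elements of the monoid (nat, +, 0).  To support eigenvariables of the
world quantifier, judgement worlds are elements of the free commutative extension
nat x (multisets of world parameters); closed concrete worlds are (n, empty).\<close>

type_synonym world = "nat \<times> nat multiset"

definition wdot :: "world \<Rightarrow> world \<Rightarrow> world" where
  "wdot u v = (fst u + fst v, snd u + snd v)"

definition wnat :: "nat \<Rightarrow> world" where
  "wnat n = (n, {#})"

definition wparam :: "nat \<Rightarrow> world" where
  "wparam a = (0, {#a#})"

text \<open>World terms occurring inside formulas (de Bruijn bound variables).\<close>
datatype wt = WW world | WB nat | WDot wt wt

fun weval :: "wt \<Rightarrow> world" where
  "weval (WW x) = x"
| "weval (WB _) = wnat 0"
| "weval (WDot s t) = wdot (weval s) (weval t)"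

fun wsubst :: "nat \<Rightarrow> world \<Rightarrow> wt \<Rightarrow> wt" where
  "wsubst k x (WW y) = WW y"
| "wsubst k x (WB j) = (if j = k then WW x else if k < j then WB (j - 1) else WB j)"
| "wsubst k x (WDot s t) = WDot (wsubst k x s) (wsubst k x t)"

fun wtparams :: "wt \<Rightarrow> nat set" where
  "wtparams (WW y) = set_mset (snd y)"
| "wtparams (WB _) = {}"
| "wtparams (WDot s t) = wtparams s \<union> wtparams t"

datatype 'a form =
    Atom 'a
  | Tens "'a form" "'a form"
  | One
  | Lolli "'a form" "'a form"
  | With "'a form" "'a form"
  | Top
  | Plus "'a form" "'a form"
  | Zero
  | Bang "'a form"
  | At "'a form" wt
  | Down "'a form"           \<comment> \<open>down u. A, u = bound variable 0\<close>
  | AllW "'a form"           \<comment> \<open>forall over worlds, bound variable 0\<close>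
  | ExW "'a form"            \<comment> \<open>exists over worlds, bound variable 0\<close>

fun fsubst :: "nat \<Rightarrow> world \<Rightarrow> 'a form \<Rightarrow> 'a form" where
  "fsubst k x (Atom p) = Atom p"
| "fsubst k x (Tens A B) = Tens (fsubst k x A) (fsubst k x B)"
| "fsubst k x One = One"
| "fsubst k x (Lolli A B) = Lolli (fsubst k x A) (fsubst k x B)"
| "fsubst k x (With A B) = With (fsubst k x A) (fsubst k x B)"
| "fsubst k x Top = Top"
| "fsubst k x (Plus A B) = Plus (fsubst k x A) (fsubst k x B)"
| "fsubst k x Zero = Zero"
| "fsubst k x (Bang A) = Bang (fsubst k x A)"
| "fsubst k x (At A t) = At (fsubst k x A) (wsubst k x t)"
| "fsubst k x (Down A) = Down (fsubst (Suc k) x A)"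
| "fsubst k x (AllW A) = AllW (fsubst (Suc k) x A)"
| "fsubst k x (ExW A) = ExW (fsubst (Suc k) x A)"

fun fparams :: "'a form \<Rightarrow> nat set" where
  "fparams (Atom p) = {}"
| "fparams (Tens A B) = fparams A \<union> fparams B"
| "fparams One = {}"
| "fparams (Lolli A B) = fparams A \<union> fparams B"
| "fparams (With A B) = fparams A \<union> fparams B"
| "fparams Top = {}"
| "fparams (Plus A B) = fparams A \<union> fparams B"
| "fparams Zero = {}"
| "fparams (Bang A) = fparams A"
| "fparams (At A t) = fparams A \<union> wtparams t"
| "fparams (Down A) = fparams A"
| "fparams (AllW A) = fparams A"
| "fparams (ExW A) = fparams A"

definition jparams :: "'a form \<times> world \<Rightarrow> nat set" where
  "jparams j = fparams (fst j) \<union> set_mset (snd (snd j))"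

definition ctx_params :: "('a form \<times> world) set \<Rightarrow> ('a form \<times> world) multiset \<Rightarrow> nat set" where
  "ctx_params G D = (\<Union>j\<in>G. jparams j) \<union> (\<Union>j\<in>set_mset D. jparams j)"

section \<open>HyLL sequent calculus:  hyll G D C w  means  G ; D |- C @ w\<close>

inductive hyll :: "('a form \<times> world) set \<Rightarrow> ('a form \<times> world) multiset \<Rightarrow> 'a form \<Rightarrow> world \<Rightarrow> bool" where
  init: "hyll G {#(Atom p, w)#} (Atom p) w"
| copy: "(A, u) \<in> G \<Longrightarrow> hyll G (D + {#(A, u)#}) C w \<Longrightarrow> hyll G D C w"
| tensR: "hyll G D1 A w \<Longrightarrow> hyll G D2 B w \<Longrightarrow> hyll G (D1 + D2) (Tens A B) w"
| tensL: "hyll G (D + {#(A, u), (B, u)#}) C w \<Longrightarrow> hyll G (D + {#(Tens A B, u)#}) C w"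
| oneR: "hyll G {#} One w"
| oneL: "hyll G D C w \<Longrightarrow> hyll G (D + {#(One, u)#}) C w"
| lolliR: "hyll G (D + {#(A, w)#}) B w \<Longrightarrow> hyll G D (Lolli A B) w"
| lolliL: "hyll G D1 A u \<Longrightarrow> hyll G (D2 + {#(B, u)#}) C w \<Longrightarrow>
           hyll G (D1 + D2 + {#(Lolli A B, u)#}) C w"
| withR: "hyll G D A w \<Longrightarrow> hyll G D B w \<Longrightarrow> hyll G D (With A B) w"
| withL1: "hyll G (D + {#(A, u)#}) C w \<Longrightarrow> hyll G (D + {#(With A B, u)#}) C w"
| withL2: "hyll G (D + {#(B, u)#}) C w \<Longrightarrow> hyll G (D + {#(With A B, u)#}) C w"
| topR: "hyll G D Top w"
| plusR1: "hyll G D A w \<Longrightarrow> hyll G D (Plus A B) w"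
| plusR2: "hyll G D B w \<Longrightarrow> hyll G D (Plus A B) w"
| plusL: "hyll G (D + {#(A, u)#}) C w \<Longrightarrow> hyll G (D + {#(B, u)#}) C w \<Longrightarrow>
          hyll G (D + {#(Plus A B, u)#}) C w"
| zeroL: "hyll G (D + {#(Zero, u)#}) C w"
| bangR: "hyll G {#} A w \<Longrightarrow> hyll G {#} (Bang A) w"
| bangL: "hyll (insert (A, u) G) D C w \<Longrightarrow> hyll G (D + {#(Bang A, u)#}) C w"
| atR: "hyll G D A (weval t) \<Longrightarrow> hyll G D (At A t) w"
| atL: "hyll G (D + {#(A, weval t)#}) C w \<Longrightarrow> hyll G (D + {#(At A t, u)#}) C w"
| downR: "hyll G D (fsubst 0 w A) w \<Longrightarrow> hyll G D (Down A) w"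
| downL: "hyll G (D + {#(fsubst 0 u A, u)#}) C w \<Longrightarrow> hyll G (D + {#(Down A, u)#}) C w"
| allR: "a \<notin> ctx_params G D \<union> fparams A \<union> set_mset (snd w) \<Longrightarrow>
         hyll G D (fsubst 0 (wparam a) A) w \<Longrightarrow> hyll G D (AllW A) w"
| allL: "hyll G (D + {#(fsubst 0 x A, u)#}) C w \<Longrightarrow> hyll G (D + {#(AllW A, u)#}) C w"
| exR: "hyll G D (fsubst 0 x A) w \<Longrightarrow> hyll G D (ExW A) w"
| exL: "a \<notin> ctx_params G D \<union> fparams A \<union> fparams C \<union> set_mset (snd w) \<union> set_mset (snd u) \<Longrightarrow>
        hyll G (D + {#(fsubst 0 (wparam a) A, u)#}) C w \<Longrightarrow> hyll G (D + {#(ExW A, u)#}) C w"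

text \<open>A state over the variable list V assigns to each variable a value:
True = present, False = absent.  The atom p_i(a_i) is Atom (a_i, value).\<close>

type_synonym 'v state = "'v \<Rightarrow> bool"
type_synonym 'v trule = "'v state \<times> 'v state"

definition enables :: "'v list \<Rightarrow> 'v trule \<Rightarrow> 'v state \<Rightarrow> 'v state \<Rightarrow> bool" where
  "enables V r s s' \<longleftrightarrow> (\<forall>a\<in>set V. s a = fst r a \<and> s' a = snd r a)"

fun tens_list :: "'a form list \<Rightarrow> 'a form" where
  "tens_list [] = One"
| "tens_list [A] = A"
| "tens_list (A # B # As) = Tens A (tens_list (B # As))"

definition enc_state :: "'v list \<Rightarrow> 'v state \<Rightarrow> ('v \<times> bool) form" where
  "enc_state V s = tens_list (map (\<lambda>a. Atom (a, s a)) V)"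

text \<open>delta_v A = down u. (A at u.v), for closed A.\<close>
definition delta :: "nat \<Rightarrow> 'a form \<Rightarrow> 'a form" where
  "delta v A = Down (At A (WDot (WB 0) (WW (wnat v))))"

definition enc_rule :: "'v list \<Rightarrow> 'v trule \<Rightarrow> ('v \<times> bool) form" where
  "enc_rule V r = AllW (Lolli (At (enc_state V (fst r)) (WB 0))
                              (At (delta 1 (enc_state V (snd r))) (WB 0)))"

definition rule_ctx :: "'v list \<Rightarrow> 'v trule list \<Rightarrow> (('v \<times> bool) form \<times> world) set" where
  "rule_ctx V R = (\<lambda>r. (enc_rule V r, wnat 0)) ` set R"

end

theory Submission
  imports Defs
begin

lemma size_fsubst[simp]: "size (fsubst k x A) = size A"
  by (induction A arbitrary: k) auto

type_synonym 'a fact = "'a \<times> world"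

function sem :: "('a fact multiset \<Rightarrow> 'a fact multiset \<Rightarrow> bool) \<Rightarrow> 'a form \<Rightarrow> world \<Rightarrow> 'a fact multiset set" where
  "sem red (Atom p) w = {M. red M {#(p,w)#}}"
| "sem red (Tens A B) w = {M. \<exists>M1 M2. red M (M1 + M2) \<and> M1 \<in> sem red A w \<and> M2 \<in> sem red B w}"
| "sem red One w = {M. red M {#}}"
| "sem red (Lolli A B) w = {M. \<forall>N\<in>sem red A w. M + N \<in> sem red B w}"
| "sem red (At A t) w = sem red A (weval t)"
| "sem red (Down A) w = sem red (fsubst 0 w A) w"
| "sem red (AllW A) w = (\<Inter>x. sem red (fsubst 0 x A) w)"
| "sem red (With A B) w = {}"
| "sem red Top w = {}"
| "sem red (Plus A B) w = {}"
| "sem red Zero w = {}"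
| "sem red (Bang A) w = {}"
| "sem red (ExW A) w = {}"
  by pat_completeness auto
termination by (relation "measure (\<lambda>(r,A,w). size A)") auto

lemma sem_closed0:
  "(\<forall>a b c. red a b \<longrightarrow> red b c \<longrightarrow> red a c) \<Longrightarrow> (\<forall>a b N. red a b \<longrightarrow> red (a + N) (b + N)) \<Longrightarrow>
   red M M' \<Longrightarrow> M' \<in> sem red A w \<Longrightarrow> M \<in> sem red A w"
proof (induction red A w arbitrary: M M' rule: sem.induct)
  case (4 red A B w)
  show ?case
  proof (simp, intro ballI)
    fix N assume N: "N \<in> sem red A w"
    have "M' + N \<in> sem red B w" using 4(6) N by (simp only: sem.simps mem_Collect_eq)
    moreover have "red (M + N) (M' + N)" using 4 by blast
    ultimately show "M + N \<in> sem red B w" using "4.IH"(2)[OF N] 4 by blast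
  qed
next
  case (1 red p w) then show ?case unfolding sem.simps mem_Collect_eq by blast
next
  case (2 red A B w) then show ?case unfolding sem.simps mem_Collect_eq by blast
next
  case (3 red w) then show ?case unfolding sem.simps mem_Collect_eq by blast
next
  case (5 red A t w) then show ?case by simp
next
  case (6 red A w) then show ?case by simp
next
  case (7 red A w) then show ?case by simp
qed simp_all

fun rok :: "'a form \<Rightarrow> bool" where
  "rok (Atom p) = True"
| "rok (Tens A B) = (rok A \<and> rok B)"
| "rok One = True"
| "rok (Down A) = rok A"
| "rok (At A t) = rok A"
| "rok _ = False"

fun lok :: "'a form \<Rightarrow> bool" where
  "lok (Atom p) = True"
| "lok (Tens A B) = (lok A \<and> lok B)"
| "lok One = True"
| "lok (Down A) = lok A"
| "lok (At A t) = lok A"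
| "lok (AllW A) = lok A"
| "lok (Lolli A B) = (rok A \<and> lok B)"
| "lok _ = False"

lemma rok_fsubst[simp]: "rok (fsubst k x A) = rok A"
  by (induction A arbitrary: k) auto

lemma lok_fsubst[simp]: "lok (fsubst k x A) = lok A"
  by (induction A arbitrary: k) auto

lemma image_mset_single_D:
  assumes "image_mset f E = {#y#}" shows "\<exists>x. E = {#x#} \<and> f x = y"
proof -
  have "size E = 1" using assms by (metis size_image_mset size_single)
  then obtain x where "E = {#x#}" by (metis size_1_singleton_mset)
  then show ?thesis using assms by auto
qed

lemma split_last:
  assumes "image_mset fst E = D + {#j#}"
  shows "\<exists>E' M. E = E' + {#(j, M)#} \<and> image_mset fst E' = D"
proof -
  obtain E1 E2 where "E = E1 + E2" "D = image_mset fst E1" "{#j#} = image_mset fst E2"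
    using image_mset_eq_plusD[OF assms] by blast
  moreover obtain x where "E2 = {#x#}" "fst x = j" using image_mset_single_D \<open>{#j#} = _\<close> by metis
  ultimately show ?thesis by (metis prod.collapse)
qed

locale redsys =
  fixes red :: "'a fact multiset \<Rightarrow> 'a fact multiset \<Rightarrow> bool"
  assumes rrefl: "red a a"
    and rtr: "red a b \<Longrightarrow> red b c \<Longrightarrow> red a c"
    and rctx: "red a b \<Longrightarrow> red (a + N) (b + N)"
begin

lemma closed: "red M M' \<Longrightarrow> M' \<in> sem red A w \<Longrightarrow> M \<in> sem red A w"
  using sem_closed0[of red M M' A w] rtr rctx by blast

definition good :: "(('a form \<times> world) \<times> 'a fact multiset) multiset \<Rightarrow> bool" where
  "good E \<longleftrightarrow> (\<forall>e\<in>#E. snd e \<in> sem red (fst (fst e)) (snd (fst e)))"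

lemma good_plus[simp]: "good (E1 + E2) \<longleftrightarrow> good E1 \<and> good E2"
  unfolding good_def by auto

lemma good_single[simp]: "good {#((A,u),M)#} \<longleftrightarrow> M \<in> sem red A u"
  unfolding good_def by auto

lemma good_add[simp]: "good (add_mset ((A,u),M) E) \<longleftrightarrow> M \<in> sem red A u \<and> good E"
  unfolding good_def by auto

lemma good_empty[simp]: "good {#}"
  unfolding good_def by auto

abbreviation tot :: "(('a form \<times> world) \<times> 'a fact multiset) multiset \<Rightarrow> 'a fact multiset" where
  "tot E \<equiv> sum_mset (image_mset snd E)"

lemma sound:
  "hyll G D C w \<Longrightarrow> \<forall>j\<in>G. lok (fst j) \<and> {#} \<in> sem red (fst j) (snd j) \<Longrightarrow>
   \<forall>j\<in>#D. lok (fst j) \<Longrightarrow> rok C \<Longrightarrow> image_mset fst E = D \<Longrightarrow> good E \<Longrightarrow>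
   tot E \<in> sem red C w"
proof (induction arbitrary: E rule: hyll.induct)
  case (init G p w)
  obtain x where "E = {#x#}" "fst x = (Atom p, w)" using image_mset_single_D[OF init.prems(4)] by blast
  then show ?case using init(5) by (cases x) simp
next
  case (copy A u G D C w)
  have GA: "lok A" "{#} \<in> sem red A u" using copy.prems(1) copy.hyps(1) by auto
  have "tot (E + {#((A,u),{#})#}) \<in> sem red C w"
    apply (rule copy.IH)
    using copy.prems GA by auto
  then show ?case by simp
next
  case (tensR G D1 A w D2 B)
  obtain E1 E2 where E: "E = E1 + E2" "D1 = image_mset fst E1" "D2 = image_mset fst E2"
    using image_mset_eq_plusD[OF tensR.prems(4)] by blast
  have "tot E1 \<in> sem red A w" using tensR E by (intro tensR.IH(1)) auto
  moreover have "tot E2 \<in> sem red B w" using tensR E by (intro tensR.IH(2)) auto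
  ultimately show ?case using E rrefl by auto
next
  case (tensL G D A u B C w)
  obtain E' M where E: "E = E' + {#((Tens A B, u), M)#}" "image_mset fst E' = D"
    using split_last[OF tensL.prems(4)] by blast
  then have "M \<in> sem red (Tens A B) u" using tensL by simp
  then obtain M1 M2 where M: "red M (M1 + M2)" "M1 \<in> sem red A u" "M2 \<in> sem red B u" by auto
  have "tot (E' + {#((A,u),M1), ((B,u),M2)#}) \<in> sem red C w"
    using tensL E M by (intro tensL.IH) auto
  then have "tot E' + (M1 + M2) \<in> sem red C w" by (simp add: ac_simps)
  moreover have "red (tot E' + M) (tot E' + (M1 + M2))" using rctx[OF M(1), of "tot E'"] by (simp add: ac_simps)
  ultimately show ?case using E closed by (simp add: ac_simps)
next
  case (oneR G w)
  then show ?case using rrefl by auto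
next
  case (oneL G D C w u)
  obtain E' M where E: "E = E' + {#((One, u), M)#}" "image_mset fst E' = D"
    using split_last[OF oneL.prems(4)] by blast
  then have "red M {#}" using oneL by simp
  have "tot E' \<in> sem red C w" using oneL E by (intro oneL.IH) auto
  moreover have "red (tot E' + M) (tot E')" using rctx[OF \<open>red M {#}\<close>, of "tot E'"] by (simp add: ac_simps)
  ultimately show ?case using E closed by (simp add: ac_simps)
next
  case (lolliL G D1 A u D2 B C w)
  obtain E' M where E: "E = E' + {#((Lolli A B, u), M)#}" "image_mset fst E' = D1 + D2"
    using split_last[OF lolliL.prems(4)] by blast
  obtain E1 E2 where E12: "E' = E1 + E2" "D1 = image_mset fst E1" "D2 = image_mset fst E2"
    using image_mset_eq_plusD[OF E(2)] by blast
  have "tot E1 \<in> sem red A u" using lolliL E E12 by (intro lolliL.IH(1)) auto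
  moreover have "M \<in> sem red (Lolli A B) u" using lolliL E by simp
  ultimately have MB: "M + tot E1 \<in> sem red B u" by simp
  have "tot (E2 + {#((B,u), M + tot E1)#}) \<in> sem red C w"
    using lolliL E E12 MB by (intro lolliL.IH(2)) auto
  then show ?case using E E12 by (simp add: ac_simps)
next
  case (atR G D A t w)
  then show ?case by simp
next
  case (atL G D A t C w u)
  obtain E' M where E: "E = E' + {#((At A t, u), M)#}" "image_mset fst E' = D"
    using split_last[OF atL.prems(4)] by blast
  have "tot (E' + {#((A, weval t), M)#}) \<in> sem red C w"
    using atL E by (intro atL.IH) auto
  then show ?case using E by simp
next
  case (downR G D w A)
  then show ?case by simp
next
  case (downL G D u A C w)
  obtain E' M where E: "E = E' + {#((Down A, u), M)#}" "image_mset fst E' = D"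
    using split_last[OF downL.prems(4)] by blast
  have "tot (E' + {#((fsubst 0 u A, u), M)#}) \<in> sem red C w"
    using downL E by (intro downL.IH) auto
  then show ?case using E by simp
next
  case (allL G D x A u C w)
  obtain E' M where E: "E = E' + {#((AllW A, u), M)#}" "image_mset fst E' = D"
    using split_last[OF allL.prems(4)] by blast
  have "tot (E' + {#((fsubst 0 x A, u), M)#}) \<in> sem red C w"
  proof (rule allL.IH)
    have "M \<in> sem red (AllW A) u" using allL.prems(5) E by simp
    then have "M \<in> sem red (fsubst 0 x A) u" by (simp only: sem.simps) blast
    then show "good (E' + {#((fsubst 0 x A, u), M)#})" using allL.prems(5) E by simp
  qed (use allL E in auto)
  then show ?case using E by simp
qed simp_all

end


lemma tens_list_closed:
  "(\<forall>A\<in>set As. fsubst k x A = A) \<Longrightarrow> fsubst k x (tens_list As) = tens_list As"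
  by (induction As rule: tens_list.induct) auto

lemma enc_closed[simp]: "fsubst k x (enc_state V s) = enc_state V s"
  unfolding enc_state_def by (rule tens_list_closed) auto

lemma delta_closed[simp]: "fsubst k x (delta m (enc_state V s)) = delta m (enc_state V s)"
  unfolding delta_def by simp

lemma lok_tl: "(\<forall>A\<in>set As. lok A) \<Longrightarrow> lok (tens_list As)"
  by (induction As rule: tens_list.induct) auto
lemma rok_tl: "(\<forall>A\<in>set As. rok A) \<Longrightarrow> rok (tens_list As)"
  by (induction As rule: tens_list.induct) auto

lemma lok_enc[simp]: "lok (enc_state V s)"
  unfolding enc_state_def by (rule lok_tl) auto
lemma rok_enc[simp]: "rok (enc_state V s)"
  unfolding enc_state_def by (rule rok_tl) auto

definition facts :: "'v list \<Rightarrow> 'v state \<Rightarrow> world \<Rightarrow> ('v \<times> bool) fact multiset" where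
  "facts V s x = mset (map (\<lambda>a. ((a, s a), x)) V)"

definition step :: "'v list \<Rightarrow> 'v trule list \<Rightarrow> ('v \<times> bool) fact multiset \<Rightarrow> ('v \<times> bool) fact multiset \<Rightarrow> bool" where
  "step V R M M' \<longleftrightarrow> (\<exists>r\<in>set R. \<exists>x N. M = N + facts V (fst r) x \<and> M' = N + facts V (snd r) (wdot x (wnat 1)))"

lemma step_ctx: assumes "step V R a b" shows "step V R (a + N) (b + N)"
proof -
  obtain r x N0 where h: "r \<in> set R" "a = N0 + facts V (fst r) x" "b = N0 + facts V (snd r) (wdot x (wnat 1))"
    using assms unfolding step_def by blast
  show ?thesis unfolding step_def
    by (intro bexI[OF _ h(1)] exI[of _ x] exI[of _ "N0 + N"]) (simp add: h ac_simps)
qed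

lemma steps_ctx: "(step V R)\<^sup>*\<^sup>* a b \<Longrightarrow> (step V R)\<^sup>*\<^sup>* (a + N) (b + N)"
proof (induction rule: rtranclp_induct)
  case base then show ?case by simp
next
  case (step y z) then show ?case by (meson rtranclp.rtrancl_into_rtrancl step_ctx)
qed

lemma redsys_steps: "redsys (step V R)\<^sup>*\<^sup>*"
  by unfold_locales (auto intro: steps_ctx rtranclp_trans)

lemma size_facts[simp]: "size (facts V s x) = length V"
  unfolding facts_def by simp

lemma facts_inj:
  assumes "V \<noteq> []" "facts V s w = facts V t u"
  shows "w = u \<and> (\<forall>a\<in>set V. s a = t a)"
proof -
  have *: "((a, s a), w) \<in># facts V t u" if "a \<in> set V" for a
  proof -
    have "((a, s a), w) \<in># facts V s w" using that by (simp add: facts_def)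
    then show ?thesis using assms(2) by simp
  qed
  have "\<forall>a\<in>set V. s a = t a \<and> w = u"
  proof
    fix a assume "a \<in> set V"
    from *[OF this] show "s a = t a \<and> w = u" unfolding facts_def by auto
  qed
  moreover obtain a where "a \<in> set V" using assms(1) by (cases V) auto
  ultimately show ?thesis by blast
qed

lemma step_facts:
  assumes "V \<noteq> []" "step V R (facts V t w) M"
  shows "\<exists>r\<in>set R. (\<forall>a\<in>set V. t a = fst r a) \<and> M = facts V (snd r) (wdot w (wnat 1))"
proof -
  obtain r x N where r: "r \<in> set R" "facts V t w = N + facts V (fst r) x"
    "M = N + facts V (snd r) (wdot x (wnat 1))" using assms(2) unfolding step_def by blast
  have "size N = 0" using arg_cong[OF r(2), of size] by simp
  then have "N = {#}" by simp
  then have "facts V t w = facts V (fst r) x" using r by simp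
  from facts_inj[OF assms(1) this] show ?thesis using r \<open>N = {#}\<close> by auto
qed

lemma reach:
  assumes "V \<noteq> []" "(step V R)\<^sup>*\<^sup>* (facts V t w) M"
  shows "\<exists>t' w'. M = facts V t' w' \<and> (M = facts V t w \<or> fst w < fst w')"
  using assms(2)
proof (induction rule: rtranclp_induct)
  case base then show ?case by blast
next
  case (step y z)
  then obtain t' w' where y: "y = facts V t' w'" "y = facts V t w \<or> fst w < fst w'" by blast
  have ww: "fst w \<le> fst w'"
    using y(2) facts_inj[OF assms(1)] y(1) by fastforce
  have "step V R (facts V t' w') z" using step(2) y(1) by simp
  from step_facts[OF assms(1) this] obtain r where "r \<in> set R" "z = facts V (snd r) (wdot w' (wnat 1))" by blast
  moreover have "fst w < fst (wdot w' (wnat 1))" using ww by (simp add: wdot_def wnat_def)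
  ultimately show ?case by blast
qed

lemma wdot_wnat[simp]: "wdot (wnat n) (wnat m) = wnat (n + m)"
  by (simp add: wdot_def wnat_def)

lemma sem_tl:
  assumes "redsys red" "xs \<noteq> []"
  shows "sem red (tens_list (map (\<lambda>a. Atom (f a)) xs)) x = {M. red M (mset (map (\<lambda>a. (f a, x)) xs))}"
  using assms(2)
proof (induction xs)
  case Nil then show ?case by simp
next
  case (Cons a xs)
  show ?case
  proof (cases xs)
    case Nil then show ?thesis by simp
  next
    case (Cons b ys)
    let ?T = "mset (map (\<lambda>a. (f a, x)) xs)"
    have IH: "sem red (tens_list (map (\<lambda>a. Atom (f a)) xs)) x = {M. red M ?T}"
      using Cons.IH Cons by simp
    have "sem red (tens_list (map (\<lambda>a. Atom (f a)) (a # xs))) x =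
          {M. \<exists>M1 M2. red M (M1 + M2) \<and> red M1 {#(f a, x)#} \<and> red M2 ?T}"
      using Cons IH by simp
    also have "\<dots> = {M. red M ({#(f a, x)#} + ?T)}"
    proof (intro Collect_cong iffI)
      fix M assume "\<exists>M1 M2. red M (M1 + M2) \<and> red M1 {#(f a, x)#} \<and> red M2 ?T"
      then obtain M1 M2 where h: "red M (M1 + M2)" "red M1 {#(f a, x)#}" "red M2 ?T" by blast
      have "red (M1 + M2) ({#(f a, x)#} + M2)" using redsys.rctx[OF assms(1) h(2)] by simp
      moreover have "red ({#(f a, x)#} + M2) ({#(f a, x)#} + ?T)"
        using redsys.rctx[OF assms(1) h(3), of "{#(f a, x)#}"] by (simp add: ac_simps)
      ultimately show "red M ({#(f a, x)#} + ?T)" using h(1) redsys.rtr[OF assms(1)] by blast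
    next
      fix M assume "red M ({#(f a, x)#} + ?T)"
      then show "\<exists>M1 M2. red M (M1 + M2) \<and> red M1 {#(f a, x)#} \<and> red M2 ?T"
        using redsys.rrefl[OF assms(1)] by blast
    qed
    finally show ?thesis by simp
  qed
qed

lemma sem_enc:
  assumes "redsys red" "V \<noteq> []"
  shows "sem red (enc_state V s) x = {M. red M (facts V s x)}"
  unfolding enc_state_def facts_def using sem_tl[OF assms, of "\<lambda>a. (a, s a)"] by simp

lemma id_tl:
  "xs \<noteq> [] \<Longrightarrow> hyll G {#(tens_list (map (\<lambda>a. Atom (f a)) xs), w)#} (tens_list (map (\<lambda>a. Atom (f a)) xs)) w"
proof (induction xs)
  case Nil then show ?case by simp
next
  case (Cons a xs)
  show ?case
  proof (cases xs)
    case Nil then show ?thesis by (simp add: hyll.init)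
  next
    case (Cons b ys)
    let ?T = "tens_list (map (\<lambda>a. Atom (f a)) xs)"
    have IH: "hyll G {#(?T, w)#} ?T w" using Cons.IH Cons by simp
    have "hyll G ({#(Atom (f a), w)#} + {#(?T, w)#}) (Tens (Atom (f a)) ?T) w"
      by (rule hyll.tensR[OF hyll.init IH])
    then have "hyll G ({#} + {#(Atom (f a), w), (?T, w)#}) (Tens (Atom (f a)) ?T) w" by (simp add: add_mset_commute)
    then have "hyll G ({#} + {#(Tens (Atom (f a)) ?T, w)#}) (Tens (Atom (f a)) ?T) w"
      by (rule hyll.tensL)
    then show ?thesis using Cons by simp
  qed
qed

lemma id_enc: "V \<noteq> [] \<Longrightarrow> hyll G {#(enc_state V s, w)#} (enc_state V s) w"
  unfolding enc_state_def by (rule id_tl) simp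

lemma enc_cong: assumes "\<forall>a\<in>set V. s a = t a" shows "enc_state V s = enc_state V t"
  unfolding enc_state_def using assms by (intro arg_cong[where f=tens_list] map_cong) auto

theorem proposition1:
  fixes V :: "'v list" and R :: "'v trule list" and s s' :: "'v state" and n :: nat
  assumes "distinct V" and "V \<noteq> []"
  shows "(\<exists>i < length R. enables V (R ! i) s s') \<longleftrightarrow>
         hyll (rule_ctx V R) {#(enc_state V s, wnat n)#} (delta 1 (enc_state V s')) (wnat n)"
proof
  assume "\<exists>i < length R. enables V (R ! i) s s'"
  then obtain i where i: "i < length R" "enables V (R ! i) s s'" by blast
  define r where "r = R ! i"
  define G where "G = rule_ctx V R"
  define P where "P = enc_state V (snd r)"
  define Q where "Q = enc_state V (fst r)"
  have es: "enc_state V s = Q" and es': "enc_state V s' = P"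
    using i(2) unfolding enables_def Q_def P_def r_def by (auto intro: enc_cong)
  have inG: "(enc_rule V r, wnat 0) \<in> G" unfolding G_def rule_ctx_def r_def using i(1) by auto
  let ?t = "WDot (WW (wnat n)) (WW (wnat 1))"
  have "hyll G {#(P, weval ?t)#} P (weval ?t)" unfolding P_def by (rule id_enc[OF assms(2)])
  then have "hyll G {#(P, weval ?t)#} (At P ?t) (wnat n)" by (rule hyll.atR)
  then have "hyll G ({#} + {#(P, weval ?t)#}) (At P ?t) (wnat n)" by simp
  then have "hyll G ({#} + {#(At P ?t, wnat n)#}) (At P ?t) (wnat n)" by (rule hyll.atL)
  then have "hyll G ({#} + {#(fsubst 0 (wnat n) (At P (WDot (WB 0) (WW (wnat 1)))), wnat n)#})
      (At P ?t) (wnat n)" unfolding P_def by simp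
  then have "hyll G ({#} + {#(delta 1 P, wnat n)#}) (At P ?t) (wnat n)"
    unfolding delta_def by (rule hyll.downL)
  then have "hyll G ({#} + {#(delta 1 P, wnat n)#}) (fsubst 0 (wnat n) (At P (WDot (WB 0) (WW (wnat 1))))) (wnat n)"
    unfolding P_def by simp
  then have "hyll G ({#} + {#(delta 1 P, wnat n)#}) (delta 1 P) (wnat n)"
    unfolding delta_def by (rule hyll.downR)
  then have "hyll G ({#} + {#(delta 1 P, weval (WW (wnat n)))#}) (delta 1 P) (wnat n)" by simp
  then have B: "hyll G ({#} + {#(At (delta 1 P) (WW (wnat n)), wnat 0)#}) (delta 1 P) (wnat n)"
    by (rule hyll.atL)
  have "hyll G {#(Q, wnat n)#} Q (weval (WW (wnat n)))" unfolding Q_def using id_enc[OF assms(2)] by simp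
  then have A: "hyll G {#(Q, wnat n)#} (At Q (WW (wnat n))) (wnat 0)" by (rule hyll.atR)
  have "hyll G ({#(Q, wnat n)#} + {#} + {#(Lolli (At Q (WW (wnat n))) (At (delta 1 P) (WW (wnat n))), wnat 0)#})
      (delta 1 P) (wnat n)" by (rule hyll.lolliL[OF A B])
  then have "hyll G ({#(Q, wnat n)#} + {#(fsubst 0 (wnat n) (Lolli (At Q (WB 0)) (At (delta 1 P) (WB 0))), wnat 0)#})
      (delta 1 P) (wnat n)" unfolding P_def Q_def by (simp add: numeral_2_eq_2)
  then have "hyll G ({#(Q, wnat n)#} + {#(enc_rule V r, wnat 0)#}) (delta 1 P) (wnat n)"
    unfolding enc_rule_def P_def Q_def by (rule hyll.allL)
  then have "hyll G {#(Q, wnat n)#} (delta 1 P) (wnat n)" by (rule hyll.copy[OF inG])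
  then show "hyll (rule_ctx V R) {#(enc_state V s, wnat n)#} (delta 1 (enc_state V s')) (wnat n)"
    using es es' G_def by simp
next
  assume H: "hyll (rule_ctx V R) {#(enc_state V s, wnat n)#} (delta 1 (enc_state V s')) (wnat n)"
  let ?red = "(step V R)\<^sup>*\<^sup>*"
  interpret redsys ?red by (rule redsys_steps)
  have Gok: "\<forall>j\<in>rule_ctx V R. lok (fst j) \<and> {#} \<in> sem ?red (fst j) (snd j)"
  proof
    fix j assume "j \<in> rule_ctx V R"
    then obtain r where r: "r \<in> set R" "j = (enc_rule V r, wnat 0)" unfolding rule_ctx_def by auto
    have "{#} \<in> sem ?red (enc_rule V r) (wnat 0)"
    proof -
      have "{#} \<in> sem ?red (Lolli (At (enc_state V (fst r)) (WW x)) (At (delta 1 (enc_state V (snd r))) (WW x))) (wnat 0)" for x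
      proof -
        have "N \<in> sem ?red (enc_state V (snd r)) (wdot x (wnat 1))"
          if "N \<in> sem ?red (enc_state V (fst r)) x" for N
        proof -
          have "?red N (facts V (fst r) x)" using that sem_enc[OF redsys_steps assms(2)] by simp
          moreover have "step V R (facts V (fst r) x) (facts V (snd r) (wdot x (wnat 1)))"
            unfolding step_def using r(1) by (metis add_0)
          ultimately show ?thesis using sem_enc[OF redsys_steps assms(2)] by simp
        qed
        then show ?thesis unfolding delta_def by simp
      qed
      then show ?thesis unfolding enc_rule_def by (simp add: numeral_2_eq_2)
    qed
    then show "lok (fst j) \<and> {#} \<in> sem ?red (fst j) (snd j)"
      using r unfolding enc_rule_def delta_def by simp
  qed
  define E where "E = {#((enc_state V s, wnat n), facts V s (wnat n))#}"
  have "good E" unfolding E_def using sem_enc[OF redsys_steps assms(2)] rrefl by simp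
  then have "tot E \<in> sem ?red (delta 1 (enc_state V s')) (wnat n)"
    by (intro sound[OF H Gok]) (simp_all add: E_def delta_def)
  then have red: "?red (facts V s (wnat n)) (facts V s' (wnat (n + 1)))"
    unfolding E_def delta_def using sem_enc[OF redsys_steps assms(2)] by simp
  show "\<exists>i < length R. enables V (R ! i) s s'"
  proof (cases rule: converse_rtranclpE[OF red])
    case 1
    then show ?thesis using facts_inj[OF assms(2) 1] by (simp add: wnat_def)
  next
    case (2 M1)
    obtain r where r: "r \<in> set R" "\<forall>a\<in>set V. s a = fst r a" "M1 = facts V (snd r) (wnat (n + 1))"
      using step_facts[OF assms(2) 2(1)] by auto
    obtain t' w' where tw: "facts V s' (wnat (n + 1)) = facts V t' w'"
      "facts V s' (wnat (n + 1)) = facts V (snd r) (wnat (n + 1)) \<or> fst (wnat (n + 1)) < fst w'"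
      using reach[OF assms(2) 2(2)[unfolded r(3)]] by blast
    have "w' = wnat (n + 1)" using facts_inj[OF assms(2) tw(1)] by simp
    then have "facts V s' (wnat (n + 1)) = facts V (snd r) (wnat (n + 1))" using tw(2) by simp
    then have "\<forall>a\<in>set V. s' a = snd r a" using facts_inj[OF assms(2)] by blast
    moreover obtain i where "i < length R" "R ! i = r" using r(1) by (metis in_set_conv_nth)
    ultimately show ?thesis using r(2) unfolding enables_def by auto
  qed
qed

end
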